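(* Let $A\in \mathbb{R}^{m\times n}$ and $b\in \mathbb{R}^m$ with $m<n$. Suppose that the linear system $Ax=b$ is consistent and has a solution $x_*$. If $x_*$ has more than $\operatorname{rank}(A)$ nonzero entries, then $Ax=b$ has infinitely many solutions with the same sign pattern as $x_*$.
   Context: The sign function is $\operatorname{sign}(r)=1,0,-1$ for $r>0$, $r=0$, $r<0$. Two vectors have the same sign pattern if their entrywise signs agree. *)

theory Defs
  imports "HOL-Analysis.Analysis"
begin

end

theory Submission
  imports Defs
begin

lemma kernel_in_support:
  fixes A :: "real ^ 'n ^ 'm" and S :: "'n set"
  assumes "card S > rank A"
  shows "\<exists>y. y \<noteq> 0 \<and> A *v y = 0 \<and> (\<forall>i. i \<notin> S \<longrightarrow> y $ i = 0)"
proof (rule ccontr)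
  assume H: "\<not> ?thesis"
  define V where "V = {y::real^'n. \<forall>i. i \<notin> S \<longrightarrow> y $ i = 0}"
  have dV0: "vec.dim V = card S"
    unfolding V_def by (rule dim_substandard_cart)
  have dV: "dim V = card S"
    using dV0 dim_vec_eq[of V] by simp
  have sV: "subspace V"
    unfolding V_def subspace_def by auto
  have lin: "linear ((*v) A)" by (simp add: matrix_vector_mul_linear)
  have inj: "inj_on ((*v) A) (span V)"
  proof (rule inj_onI)
    fix x y assume xy: "x \<in> span V" "y \<in> span V" "A *v x = A *v y"
    have "x - y \<in> V" using xy(1,2) sV span_eq_iff
      by (metis subspace_diff)
    moreover have "A *v (x - y) = 0" using xy(3) by (simp add: matrix_vector_mult_diff_distrib)
    ultimately have "x - y = 0" using H unfolding V_def by blast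
    then show "x = y" by simp
  qed
  have "dim ((*v) A ` V) = dim V" by (rule dim_image_eq[OF lin inj])
  moreover have "dim ((*v) A ` V) \<le> rank A"
    unfolding rank_dim_range by (rule dim_subset) auto
  ultimately show False using assms dV by simp
qed

theorem lemma2p2:
  fixes A :: "real ^ 'n ^ 'm" and b :: "real ^ 'm" and xs :: "real ^ 'n"
  assumes "CARD('m) < CARD('n)"
    and "A *v xs = b"
    and "card {i. xs $ i \<noteq> 0} > rank A"
  shows "infinite {x. A *v x = b \<and> (\<forall>i. sgn (x $ i) = sgn (xs $ i))}"
proof -
  define S where "S = {i. xs $ i \<noteq> 0}"
  obtain y where y: "y \<noteq> 0" "A *v y = 0" "\<And>i. i \<notin> S \<Longrightarrow> y $ i = 0"
    using kernel_in_support[of A S] assms(3) unfolding S_def by blast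
  have "card S \<noteq> 0" using assms(3) unfolding S_def by linarith
  then have Sne: "S \<noteq> {}" by auto
  define M where "M = Max (range (\<lambda>i. \<bar>y $ i\<bar>))"
  define d where "d = Min ((\<lambda>i. \<bar>xs $ i\<bar>) ` S)"
  have My: "\<bar>y $ i\<bar> \<le> M" for i unfolding M_def by (rule Max_ge) auto
  obtain j where "y $ j \<noteq> 0" using y(1) by (metis vec_eq_iff zero_index)
  then have Mpos: "M > 0" using My[of j] by linarith
  have dle: "d \<le> \<bar>xs $ i\<bar>" if "i \<in> S" for i unfolding d_def using that by (intro Min_le) auto
  have dpos: "d > 0" unfolding d_def using Sne by (subst Min_gr_iff) (auto simp: S_def)
  define f where "f t = xs + t *\<^sub>R y" for t
  have sub: "f ` {0<..<d/M} \<subseteq> {x. A *v x = b \<and> (\<forall>i. sgn (x $ i) = sgn (xs $ i))}"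
  proof safe
    fix t :: real assume t: "t \<in> {0<..<d/M}"
    show "A *v f t = b" using assms(2) y(2)
      by (simp add: f_def matrix_vector_right_distrib matrix_vector_mult_scaleR)
    fix i
    show "sgn (f t $ i) = sgn (xs $ i)"
    proof (cases "i \<in> S")
      case False then show ?thesis using y(3)[of i] by (simp add: f_def S_def)
    next
      case True
      have "\<bar>t * y $ i\<bar> \<le> t * M" using t My[of i] by (simp add: abs_mult mult_left_mono)
      also have "\<dots> < d" using t Mpos by (simp add: field_simps)
      finally have "\<bar>t * y $ i\<bar> < \<bar>xs $ i\<bar>" using dle[OF True] by linarith
      then show ?thesis by (simp add: f_def sgn_if) (smt (verit))
    qed
  qed
  have "inj f" unfolding f_def inj_def using y(1) by auto
  moreover have "infinite {0<..<d/M}" using dpos Mpos by simp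
  ultimately have "infinite (f ` {0<..<d/M})" by (meson finite_imageD inj_on_subset subset_UNIV)
  then show ?thesis using sub finite_subset by blast
qed

end
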